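(* Let $P$ be a tree poset of height $h$, and suppose there is an element $x\in P$ with the following property: for every $\varepsilon>0$ there exists $\delta>0$ such that for every sufficiently large $n\in\mathbb N$, every family $\mathcal F\subseteq 2^{[n]}$ with $|\mathcal F|\ge (h-1+\varepsilon)\binom{n}{\lfloor n/2\rfloor}$ contains a copy of the blow-up $P(x,\delta n)$. Then the number of $P$-free families in $2^{[n]}$ is $$2^{(h-1+o(1))\binom{n}{\lfloor n/2\rfloor}}\quad (n\to\infty).$$
   Context: Posets are finite collections of finite sets ordered by inclusion. A poset homomorphism $\phi:P\to Q$ is a map with $A\subseteq B\Rightarrow \phi(A)\subseteq\phi(B)$. $P$ is a subposet of $Q$ (and $Q$ "contains a copy of $P$") if there is an injective poset homomorphism $P\to Q$; otherwise $Q$ is $P$-free. The Hasse diagram of $P$ is the directed graph on $P$ with an edge $A\to B$ when $A\subsetneq B$ and no $C\in P$ has $A\subsetneq C\subsetneq B$; the undirected Hasse diagram forgets orientations. A tree poset is a poset whose undirected Hasse diagram is a tree. The height $h(P)$ is the number of elements of a longest chain in $P$. For a tree poset $P$, $x\in P$ and an integer $d\ge2$, the $d$-blow-up $P(x,d)$ rooted at $x$ is the tree poset whose Hasse diagram is obtained as follows: each $u\in P$ at distance $\rho$ from $x$ in the undirected Hasse diagram is replaced by $d^{\rho}$ elements $u^1,\dots,u^{d^\rho}$; for each edge $uv$ of the Hasse diagram with $v$ at distance $\rho-1$ from $x$ (and $u$ at distance $\rho$), the $u^i$ are partitioned into $d^{\rho-1}$ disjoint sets $U^1,\dots,U^{d^{\rho-1}}$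 of size $d$ and $v^j$ is joined to every element of $U^j$, with the same orientation as the edge $uv$. Non-integer blow-up parameters such as $\delta n$ are rounded down to integers. *)

theory Defs
  imports Complex_Main
begin

text \<open>Posets are finite collections of finite sets, ordered by inclusion.\<close>

definition is_poset :: "'a set set \<Rightarrow> bool" where
  "is_poset P \<longleftrightarrow> finite P \<and> (\<forall>A\<in>P. finite A)"

definition contains_copy :: "'b set set \<Rightarrow> 'a set set \<Rightarrow> bool" where
  "contains_copy Q P \<longleftrightarrow>
     (\<exists>\<phi>. \<phi> ` P \<subseteq> Q \<and> inj_on \<phi> P \<and> (\<forall>A\<in>P. \<forall>B\<in>P. A \<subseteq> B \<longrightarrow> \<phi> A \<subseteq> \<phi> B))"

definition P_free :: "'a set set \<Rightarrow> 'b set set \<Rightarrow> bool" where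
  "P_free P Q \<longleftrightarrow> \<not> contains_copy Q P"

definition hasse :: "'a set set \<Rightarrow> 'a set \<Rightarrow> 'a set \<Rightarrow> bool" where
  "hasse P A B \<longleftrightarrow> A \<in> P \<and> B \<in> P \<and> A \<subset> B \<and> \<not> (\<exists>C\<in>P. A \<subset> C \<and> C \<subset> B)"

definition hasse_adj :: "'a set set \<Rightarrow> ('a set \<times> 'a set) set" where
  "hasse_adj P = {(A, B). hasse P A B \<or> hasse P B A}"

definition hasse_edges :: "'a set set \<Rightarrow> 'a set set set" where
  "hasse_edges P = {{A, B} | A B. hasse P A B}"

definition tree_poset :: "'a set set \<Rightarrow> bool" where
  "tree_poset P \<longleftrightarrow> is_poset P \<and> P \<noteq> {} \<and>
     (\<forall>A\<in>P. \<forall>B\<in>P. (A, B) \<in> (hasse_adj P)\<^sup>*) \<and>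
     card (hasse_edges P) = card P - 1"

definition is_chain :: "'a set set \<Rightarrow> bool" where
  "is_chain C \<longleftrightarrow> (\<forall>A\<in>C. \<forall>B\<in>C. A \<subseteq> B \<or> B \<subseteq> A)"

definition height :: "'a set set \<Rightarrow> nat" where
  "height P = Max {card C | C. C \<subseteq> P \<and> is_chain C}"

definition hdist :: "'a set set \<Rightarrow> 'a set \<Rightarrow> 'a set \<Rightarrow> nat" where
  "hdist P x u = (LEAST k. (x, u) \<in> (hasse_adj P) ^^ k)"

text \<open>The d-blow-up P(x,d): element u at distance rho is replaced by the copies (u,i), i < d^rho.
  For a Hasse edge between u (distance rho) and v (distance rho-1), the copy v^j is joined to
  the block U^j = {u^i. i div d = j} (a partition into d^(rho-1) blocks of size d), with the
  orientation of the original edge.\<close>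
definition blowup_vertices :: "'a set set \<Rightarrow> 'a set \<Rightarrow> nat \<Rightarrow> ('a set \<times> nat) set" where
  "blowup_vertices P x d = {(u, i). u \<in> P \<and> i < d ^ hdist P x u}"

definition blowup_hasse :: "'a set set \<Rightarrow> 'a set \<Rightarrow> nat \<Rightarrow> ('a set \<times> nat) \<Rightarrow> ('a set \<times> nat) \<Rightarrow> bool" where
  "blowup_hasse P x d a b \<longleftrightarrow>
     a \<in> blowup_vertices P x d \<and> b \<in> blowup_vertices P x d \<and> hasse P (fst a) (fst b) \<and>
     ((hdist P x (fst a) = hdist P x (fst b) + 1 \<and> snd b = snd a div d) \<or>
      (hdist P x (fst b) = hdist P x (fst a) + 1 \<and> snd a = snd b div d))"

text \<open>Since the order of the tree poset P(x,d) is the reflexive-transitive closure of its Hasse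
  edges, monotonicity is equivalent to monotonicity along the (directed) Hasse edges.\<close>
definition contains_blowup :: "'b set set \<Rightarrow> 'a set set \<Rightarrow> 'a set \<Rightarrow> nat \<Rightarrow> bool" where
  "contains_blowup Q P x d \<longleftrightarrow>
     (\<exists>\<phi>. \<phi> ` blowup_vertices P x d \<subseteq> Q \<and> inj_on \<phi> (blowup_vertices P x d) \<and>
          (\<forall>a b. blowup_hasse P x d a b \<longrightarrow> \<phi> a \<subseteq> \<phi> b))"

end

theory Submission
  imports Defs "HOL-Real_Asymp.Real_Asymp"
begin


lemma hasse_chain_mono:
  assumes fin: "finite P" and hm: "\<And>A B. hasse P A B \<Longrightarrow> \<psi> A \<subseteq> \<psi> B"
  shows "A \<in> P \<Longrightarrow> B \<in> P \<Longrightarrow> A \<subseteq> B \<Longrightarrow> \<psi> A \<subseteq> \<psi> B"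
proof (induction "card {C\<in>P. A \<subset> C \<and> C \<subseteq> B}" arbitrary: A rule: less_induct)
  case less
  show ?case
  proof (cases "A = B")
    case True then show ?thesis by simp
  next
    case False
    let ?S = "{C\<in>P. A \<subset> C \<and> C \<subseteq> B}"
    have fS: "finite ?S" using fin by auto
    have ne: "?S \<noteq> {}" using less False by auto
    obtain C where C: "C \<in> ?S" and Cmin: "\<forall>b\<in>?S. b \<le> C \<longrightarrow> C = b"
      using finite_has_minimal[OF fS ne] by blast
    have h: "hasse P A C"
    proof -
      have "\<not> (\<exists>D\<in>P. A \<subset> D \<and> D \<subset> C)"
      proof
        assume "\<exists>D\<in>P. A \<subset> D \<and> D \<subset> C"
        then obtain D where D: "D \<in> P" "A \<subset> D" "D \<subset> C" by blast
        then have "D \<in> ?S" using C by auto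
        then show False using Cmin D by auto
      qed
      then show ?thesis unfolding hasse_def using C less.prems by auto
    qed
    have sub: "{D\<in>P. C \<subset> D \<and> D \<subseteq> B} \<subset> ?S" using C by auto
    have "card {D\<in>P. C \<subset> D \<and> D \<subseteq> B} < card ?S" using psubset_card_mono[OF fS sub] .
    then have "\<psi> C \<subseteq> \<psi> B" using less C by auto
    then show ?thesis using hm[OF h] by auto
  qed
qed

locale tp =
  fixes P :: "'a set set" and x :: "'a set"
  assumes tree: "tree_poset P" and xP: "x \<in> P"
begin

abbreviation "R \<equiv> hasse_adj P"
abbreviation "dd \<equiv> hdist P x"

definition par :: "'a set \<Rightarrow> 'a set" where
  "par u = (SOME v. (v,u) \<in> R \<and> dd v + 1 = dd u)"

lemma finP: "finite P" using tree unfolding tree_poset_def is_poset_def by auto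

lemma R_in: "(a,b) \<in> R \<Longrightarrow> a \<in> P \<and> b \<in> P"
  unfolding hasse_adj_def hasse_def by auto

lemma R_sym: "(a,b) \<in> R \<Longrightarrow> (b,a) \<in> R"
  unfolding hasse_adj_def by auto

lemma reach: "u \<in> P \<Longrightarrow> (x,u) \<in> R ^^ dd u"
proof -
  assume "u \<in> P"
  then have "(x,u) \<in> R\<^sup>*" using tree xP unfolding tree_poset_def by auto
  then obtain k where "(x,u) \<in> R ^^ k" using rtrancl_power by blast
  then show ?thesis unfolding hdist_def by (rule LeastI)
qed

lemma dd_le: "(x,u) \<in> R ^^ k \<Longrightarrow> dd u \<le> k"
  unfolding hdist_def by (rule Least_le)

lemma dd_x: "dd x = 0"
  using dd_le[of x 0] by simp

lemma dd_0: "u \<in> P \<Longrightarrow> dd u = 0 \<Longrightarrow> u = x"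
  using reach[of u] by simp

lemma dd_adj: "(v,u) \<in> R \<Longrightarrow> dd u \<le> dd v + 1"
proof -
  assume a: "(v,u) \<in> R"
  then have "v \<in> P" using R_in by auto
  then have "(x,v) \<in> R ^^ dd v" by (rule reach)
  then have "(x,u) \<in> R ^^ Suc (dd v)" using a by auto
  then show ?thesis using dd_le by fastforce
qed

lemma par_ex: "u \<in> P \<Longrightarrow> u \<noteq> x \<Longrightarrow> \<exists>v. (v,u) \<in> R \<and> dd v + 1 = dd u"
proof -
  assume u: "u \<in> P" "u \<noteq> x"
  then have "dd u \<noteq> 0" using dd_0 by auto
  then obtain k where k: "dd u = Suc k" by (cases "dd u") auto
  have "(x,u) \<in> R ^^ Suc k" using reach[OF u(1)] k by simp
  then obtain v where v: "(x,v) \<in> R ^^ k" "(v,u) \<in> R" by auto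
  have "dd v \<le> k" using dd_le[OF v(1)] .
  moreover have "dd u \<le> dd v + 1" using dd_adj[OF v(2)] .
  ultimately show ?thesis using v k by auto
qed

lemma par: assumes "u \<in> P" "u \<noteq> x"
  shows "(par u, u) \<in> R" "dd (par u) + 1 = dd u" "par u \<in> P"
proof -
  show 1: "(par u, u) \<in> R" "dd (par u) + 1 = dd u"
    using someI_ex[OF par_ex[OF assms]] unfolding par_def by auto
  show "par u \<in> P" using R_in[OF 1(1)] by auto
qed

lemma edges_par: assumes h: "hasse P A B"
  shows "(A \<noteq> x \<and> par A = B) \<or> (B \<noteq> x \<and> par B = A)"
proof -
  let ?e = "\<lambda>u. {u, par u}"
  have inj: "inj_on ?e (P - {x})"
  proof (rule inj_onI)
    fix u v assume u: "u \<in> P - {x}" and v: "v \<in> P - {x}" and eq: "?e u = ?e v"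
    show "u = v"
    proof (rule ccontr)
      assume "u \<noteq> v"
      then have "u = par v" "v = par u" using eq by (auto simp: doubleton_eq_iff)
      then show False using par(2)[of u] par(2)[of v] u v by auto
    qed
  qed
  have sub: "?e ` (P - {x}) \<subseteq> hasse_edges P"
  proof
    fix E assume "E \<in> ?e ` (P - {x})"
    then obtain u where u: "u \<in> P" "u \<noteq> x" "E = {u, par u}" by auto
    have "(par u, u) \<in> R" using par u by auto
    then have "hasse P (par u) u \<or> hasse P u (par u)" unfolding hasse_adj_def by auto
    then show "E \<in> hasse_edges P" unfolding hasse_edges_def using u(3) by (auto simp: insert_commute)
  qed
  have fE: "finite (hasse_edges P)"
  proof -
    have "hasse_edges P \<subseteq> Pow P" unfolding hasse_edges_def hasse_def by auto
    then show ?thesis using finP finite_subset by blast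
  qed
  have "card (?e ` (P - {x})) = card P - 1"
    using card_image[OF inj] xP finP by auto
  also have "\<dots> = card (hasse_edges P)" using tree unfolding tree_poset_def by auto
  finally have "?e ` (P - {x}) = hasse_edges P" using card_subset_eq[OF fE sub] by auto
  moreover have "{A,B} \<in> hasse_edges P" using h unfolding hasse_edges_def by auto
  ultimately obtain u where u: "u \<in> P" "u \<noteq> x" "{A,B} = {u, par u}"
    by (metis (no_types, lifting) DiffE imageE singletonI)
  have "A \<noteq> B" using h unfolding hasse_def by auto
  then show ?thesis using u by (auto simp: doubleton_eq_iff)
qed

end

locale bl = tp P x for P :: "'a set set" and x +
  fixes d :: nat and \<phi> :: "'a set \<times> nat \<Rightarrow> 'c set" and U :: "'c set set"
  assumes dpos: "d > 0"
    and img: "\<phi> ` blowup_vertices P x d \<subseteq> U"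
    and inj: "inj_on \<phi> (blowup_vertices P x d)"
    and mono: "\<And>a b. blowup_hasse P x d a b \<Longrightarrow> \<phi> a \<subseteq> \<phi> b"
begin

primrec ix :: "('c set \<Rightarrow> bool) \<Rightarrow> nat \<Rightarrow> 'a set \<Rightarrow> nat option" where
  "ix Q 0 u = (if Q (\<phi> (x,0)) then Some 0 else None)"
| "ix Q (Suc k) u = (case ix Q k (par u) of None \<Rightarrow> None
     | Some i \<Rightarrow> if (\<exists>t<d. Q (\<phi> (u, i*d+t))) then Some (i*d + (LEAST t. Q (\<phi> (u, i*d+t)))) else None)"

definition idx :: "('c set \<Rightarrow> bool) \<Rightarrow> 'a set \<Rightarrow> nat option" where
  "idx Q u = ix Q (dd u) u"

lemma idx_root: "idx Q x = (if Q (\<phi> (x,0)) then Some 0 else None)"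
  unfolding idx_def dd_x by simp

lemma idx_step: assumes "u \<in> P" "u \<noteq> x"
  shows "idx Q u = (case idx Q (par u) of None \<Rightarrow> None
     | Some i \<Rightarrow> if (\<exists>t<d. Q (\<phi> (u, i*d+t))) then Some (i*d + (LEAST t. Q (\<phi> (u, i*d+t)))) else None)"
proof -
  have "dd u = Suc (dd (par u))" using par(2)[OF assms] by simp
  then show ?thesis unfolding idx_def by simp
qed

lemma child_bv: assumes "u \<in> P" "u \<noteq> x" "i < d ^ dd (par u)" "t < d"
  shows "(u, i*d+t) \<in> blowup_vertices P x d"
proof -
  have "i*d + t < (i+1)*d" using assms(4) by simp
  also have "\<dots> \<le> d ^ dd (par u) * d" using assms(3) by (intro mult_right_mono) auto
  also have "\<dots> = d ^ dd u" using par(2)[OF assms(1,2)] by (metis Suc_eq_plus1 power_Suc2)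
  finally show ?thesis unfolding blowup_vertices_def using assms by auto
qed

lemma idx_prop: "u \<in> P \<Longrightarrow> idx Q u = Some j \<Longrightarrow> (u, j) \<in> blowup_vertices P x d \<and> Q (\<phi> (u,j))"
proof (induction "dd u" arbitrary: u j rule: less_induct)
  case less
  show ?case
  proof (cases "u = x")
    case True
    then show ?thesis using less.prems idx_root[of Q] xP dpos unfolding blowup_vertices_def
      by (auto split: if_splits)
  next
    case False
    note st = idx_step[OF less.prems(1) False, of Q]
    obtain i where i: "idx Q (par u) = Some i" using less.prems st by (cases "idx Q (par u)") auto
    have ex: "\<exists>t<d. Q (\<phi> (u, i*d+t))" using less.prems st i by (auto split: if_splits)
    let ?t = "LEAST t. Q (\<phi> (u, i*d+t))"
    have j: "j = i*d + ?t" using less.prems st i ex by auto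
    have tq: "Q (\<phi> (u, i*d+?t))" using ex by (metis (mono_tags, lifting) LeastI)
    have tl: "?t < d" using ex by (meson Least_le le_less_trans)
    have "dd (par u) < dd u" using par(2)[OF less.prems(1) False] by simp
    then have "(par u, i) \<in> blowup_vertices P x d" using less.hyps par(3)[OF less.prems(1) False] i by blast
    then have "i < d ^ dd (par u)" unfolding blowup_vertices_def by auto
    then show ?thesis using child_bv[OF less.prems(1) False _ tl] j tq by auto
  qed
qed

lemma idx_par: assumes "u \<in> P" "u \<noteq> x" "idx Q u = Some j"
  shows "\<exists>i. idx Q (par u) = Some i \<and> j div d = i \<and> j mod d < d"
proof -
  note st = idx_step[OF assms(1,2), of Q]
  obtain i where i: "idx Q (par u) = Some i" using assms st by (cases "idx Q (par u)") auto
  have ex: "\<exists>t<d. Q (\<phi> (u, i*d+t))" using assms st i by (auto split: if_splits)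
  let ?t = "LEAST t. Q (\<phi> (u, i*d+t))"
  have j: "j = i*d + ?t" using assms st i ex by auto
  have tl: "?t < d" using ex by (meson Least_le le_less_trans)
  show ?thesis using i j tl dpos by auto
qed

definition Yset :: "('c set \<Rightarrow> bool) \<Rightarrow> 'c set set" where
  "Yset Q = {\<phi> (u,j) | u j. u \<in> P \<and> idx Q u = Some j}"

definition Nset :: "('c set \<Rightarrow> bool) \<Rightarrow> 'c set set" where
  "Nset Q = {\<phi> (x,0) | w. w = x \<and> idx Q x = None} \<union>
     {\<phi> (u, i*d+s) | u i s. u \<in> P \<and> u \<noteq> x \<and> idx Q (par u) = Some i \<and> s < d \<and>
        (idx Q u = None \<or> (\<exists>j. idx Q u = Some j \<and> i*d+s < j))}"

lemma determ: assumes agree: "\<And>e. e \<in> Yset Q \<union> Nset Q \<Longrightarrow> Q' e = Q e"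
  shows "u \<in> P \<Longrightarrow> idx Q' u = idx Q u"
proof (induction "dd u" arbitrary: u rule: less_induct)
  case less
  have root: "Q' (\<phi> (x,0)) = Q (\<phi> (x,0))"
  proof (cases "Q (\<phi> (x,0))")
    case True
    then have "\<phi> (x,0) \<in> Yset Q" unfolding Yset_def using idx_root[of Q] xP by auto
    then show ?thesis using agree by auto
  next
    case False
    then have "\<phi> (x,0) \<in> Nset Q" unfolding Nset_def using idx_root[of Q] by auto
    then show ?thesis using agree by auto
  qed
  show ?case
  proof (cases "u = x")
    case True
    then show ?thesis using root idx_root by simp
  next
    case False
    have "dd (par u) < dd u" using par(2)[OF less.prems(1) False] by simp
    then have ih: "idx Q' (par u) = idx Q (par u)" using less.hyps par(3)[OF less.prems(1) False] by blast
    show ?thesis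
    proof (cases "idx Q (par u)")
      case None
      then show ?thesis using idx_step[OF less.prems False] ih by simp
    next
      case (Some i)
      let ?e = "\<lambda>t. \<phi> (u, i*d+t)"
      have cl: "Q' (?e t) = Q (?e t)" if t: "t < d" and bef: "\<forall>t'<t. \<not> Q (?e t')" for t
      proof (cases "Q (?e t)")
        case True
        have ex: "\<exists>t<d. Q (?e t)" using True t by auto
        have "(LEAST t. Q (?e t)) = t"
          by (rule Least_equality) (use True bef in \<open>auto simp: not_less[symmetric]\<close>)
        then have "idx Q u = Some (i*d+t)" using idx_step[OF less.prems \<open>u \<noteq> x\<close>, of Q] Some ex by simp
        then have "?e t \<in> Yset Q" unfolding Yset_def using less.prems by auto
        then show ?thesis using agree by auto
      next
        case False
        have "(idx Q u = None \<or> (\<exists>j. idx Q u = Some j \<and> i*d+t < j))"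
        proof (cases "\<exists>t<d. Q (?e t)")
          case True
          let ?t0 = "LEAST t. Q (?e t)"
          have q0: "Q (?e ?t0)" using True by (metis (mono_tags, lifting) LeastI)
          have "\<not> ?t0 < t" using bef q0 by blast
          moreover have "?t0 \<noteq> t" using q0 False by auto
          ultimately have "t < ?t0" by auto
          then show ?thesis using idx_step[OF less.prems \<open>u \<noteq> x\<close>, of Q] Some True by simp
        next
          case False
          then have "idx Q u = None" using idx_step[OF less.prems \<open>u \<noteq> x\<close>, of Q] Some by simp
          then show ?thesis by simp
        qed
        then have "?e t \<in> Nset Q" unfolding Nset_def using less.prems \<open>u \<noteq> x\<close> Some t by blast
        then show ?thesis using agree by auto
      qed
      show ?thesis
      proof (cases "\<exists>t<d. Q (?e t)")
        case True
        let ?t0 = "LEAST t. Q (?e t)"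
        have q0: "Q (?e ?t0)" using True by (metis (mono_tags, lifting) LeastI)
        have t0d: "?t0 < d" using True by (meson Least_le le_less_trans)
        have bef: "\<forall>t'<?t0. \<not> Q (?e t')" using not_less_Least by blast
        have q0': "Q' (?e ?t0)" using cl[OF t0d bef] q0 by simp
        have bef': "\<forall>t'<?t0. \<not> Q' (?e t')"
          using cl bef t0d by (metis (no_types, lifting) order.strict_trans)
        have L: "(LEAST t. Q' (?e t)) = ?t0"
          by (rule Least_equality) (use q0' bef' in \<open>auto simp: not_less[symmetric]\<close>)
        have ex': "\<exists>t<d. Q' (?e t)" using q0' t0d by auto
        show ?thesis using idx_step[OF less.prems \<open>u \<noteq> x\<close>, of Q] idx_step[OF less.prems \<open>u \<noteq> x\<close>, of Q']
            Some ih True ex' L by simp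
      next
        case False
        have "\<forall>t'<t. \<not> Q (?e t')" if "t \<le> d" for t using False that by auto
        then have "\<not> Q' (?e t)" if "t < d" for t using cl False that by (metis less_imp_le)
        then have nex: "\<not> (\<exists>t<d. Q' (?e t))" by auto
        show ?thesis using idx_step[OF less.prems \<open>u \<noteq> x\<close>, of Q] idx_step[OF less.prems \<open>u \<noteq> x\<close>, of Q']
            Some ih False nex by simp
      qed
    qed
  qed
qed


lemma determ_sets: assumes agree: "\<And>e. e \<in> Yset Q \<union> Nset Q \<Longrightarrow> Q' e = Q e"
  shows "Yset Q' = Yset Q" "Nset Q' = Nset Q"
proof -
  have eq: "\<And>u. u \<in> P \<Longrightarrow> idx Q' u = idx Q u" using determ[where Q=Q and Q'=Q'] agree by blast
  have pe: "\<And>u. u \<in> P \<Longrightarrow> u \<noteq> x \<Longrightarrow> idx Q' (par u) = idx Q (par u)" using eq par(3) by blast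
  have c1: "\<And>u j. (u \<in> P \<and> idx Q' u = Some j) = (u \<in> P \<and> idx Q u = Some j)" using eq by auto
  show "Yset Q' = Yset Q" unfolding Yset_def by (simp only: c1)
  have c2: "(u \<in> P \<and> u \<noteq> x \<and> idx Q' (par u) = Some i \<and> s < d \<and>
        (idx Q' u = None \<or> (\<exists>j. idx Q' u = Some j \<and> i*d+s < j))) =
      (u \<in> P \<and> u \<noteq> x \<and> idx Q (par u) = Some i \<and> s < d \<and>
        (idx Q u = None \<or> (\<exists>j. idx Q u = Some j \<and> i*d+s < j)))" for u i s
  proof (cases "u \<in> P \<and> u \<noteq> x")
    case True then show ?thesis using eq[of u] pe[of u] by simp
  next
    case False then show ?thesis by blast
  qed
  show "Nset Q' = Nset Q" unfolding Nset_def using eq[OF xP] by (simp only: c2)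
qed

lemma Y_Q: "e \<in> Yset Q \<Longrightarrow> Q e"
  unfolding Yset_def using idx_prop by auto

lemma N_Q: assumes "e \<in> Nset Q" shows "\<not> Q e"
proof -
  from assms consider (r) "e = \<phi> (x,0)" "idx Q x = None"
    | (c) u i s where "e = \<phi> (u, i*d+s)" "u \<in> P" "u \<noteq> x" "idx Q (par u) = Some i" "s < d"
      "(idx Q u = None \<or> (\<exists>j. idx Q u = Some j \<and> i*d+s < j))"
    unfolding Nset_def by (simp only: Un_iff mem_Collect_eq) (elim disjE exE conjE; metis)
  then show ?thesis
  proof cases
    case r then show ?thesis using idx_root[of Q] by (auto split: if_splits)
  next
    case (c u i s)
    note a = c
    note st = idx_step[OF a(2,3), of Q]
    show ?thesis
    proof (cases "\<exists>t<d. Q (\<phi> (u, i*d+t))")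
      case True
      then have "idx Q u = Some (i*d + (LEAST t. Q (\<phi> (u, i*d+t))))" using st a(4) by simp
      then have "s < (LEAST t. Q (\<phi> (u, i*d+t)))" using a(6) by simp
      then show ?thesis using a(1) not_less_Least by blast
    next
      case False
      then show ?thesis using a by auto
    qed
  qed
qed

lemma finBV: "finite (blowup_vertices P x d)"
proof -
  have "blowup_vertices P x d \<subseteq> P \<times> {..<d ^ Max (dd ` P)}"
  proof
    fix a assume "a \<in> blowup_vertices P x d"
    then obtain u i where a: "a = (u,i)" "u \<in> P" "i < d ^ dd u" unfolding blowup_vertices_def by auto
    have "dd u \<le> Max (dd ` P)" using a(2) finP by auto
    then have "d ^ dd u \<le> d ^ Max (dd ` P)" using dpos by (simp add: power_increasing)
    then show "a \<in> P \<times> {..<d ^ Max (dd ` P)}" using a by auto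
  qed
  then show ?thesis using finP finite_subset by blast
qed

lemma Y_BV: "Yset Q \<subseteq> \<phi> ` blowup_vertices P x d"
  unfolding Yset_def using idx_prop by blast

lemma N_BV: "Nset Q \<subseteq> \<phi> ` blowup_vertices P x d"
proof
  fix e assume "e \<in> Nset Q"
  then consider "e = \<phi> (x,0)" | u i s where "e = \<phi> (u, i*d+s)" "u \<in> P" "u \<noteq> x" "idx Q (par u) = Some i" "s < d"
    unfolding Nset_def by blast
  then show "e \<in> \<phi> ` blowup_vertices P x d"
  proof cases
    case 1 then show ?thesis using xP dd_x unfolding blowup_vertices_def by (auto intro!: imageI)
  next
    case (2 u i s)
    have "(par u, i) \<in> blowup_vertices P x d" using idx_prop[OF par(3)[OF 2(2,3)] 2(4)] by auto
    then have "i < d ^ dd (par u)" unfolding blowup_vertices_def by auto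
    then show ?thesis using child_bv[OF 2(2,3) _ 2(5)] 2(1) by auto
  qed
qed

lemma YN_U: "Yset Q \<subseteq> U" "Nset Q \<subseteq> U" "finite (Yset Q)" "finite (Nset Q)"
proof -
  show "Yset Q \<subseteq> U" using Y_BV img by (rule order.trans)
  show "Nset Q \<subseteq> U" using N_BV img by (rule order.trans)
  show "finite (Yset Q)" using Y_BV finite_imageI[OF finBV] by (rule finite_subset)
  show "finite (Nset Q)" using N_BV finite_imageI[OF finBV] by (rule finite_subset)
qed

lemma card_Y: "card (Yset Q) \<le> card P"
proof -
  have "Yset Q = (\<lambda>u. \<phi> (u, the (idx Q u))) ` {u\<in>P. idx Q u \<noteq> None}"
  proof
    show "Yset Q \<subseteq> (\<lambda>u. \<phi> (u, the (idx Q u))) ` {u\<in>P. idx Q u \<noteq> None}"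
    proof
      fix e assume "e \<in> Yset Q"
      then obtain u j where "u \<in> P" "idx Q u = Some j" "e = \<phi> (u,j)" unfolding Yset_def by blast
      then show "e \<in> (\<lambda>u. \<phi> (u, the (idx Q u))) ` {u\<in>P. idx Q u \<noteq> None}"
        by (intro image_eqI[of _ _ u]) auto
    qed
    show "(\<lambda>u. \<phi> (u, the (idx Q u))) ` {u\<in>P. idx Q u \<noteq> None} \<subseteq> Yset Q"
      unfolding Yset_def by force
  qed
  also have "card \<dots> \<le> card {u\<in>P. idx Q u \<noteq> None}" by (intro card_image_le) (use finP in auto)
  also have "\<dots> \<le> card P" using finP by (intro card_mono) auto
  finally show ?thesis .
qed

lemma root_none: "\<not> Q (\<phi> (x,0)) \<Longrightarrow> u \<in> P \<Longrightarrow> idx Q u = None"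
proof (induction "dd u" arbitrary: u rule: less_induct)
  case less
  show ?case
  proof (cases "u = x")
    case True then show ?thesis using less idx_root by simp
  next
    case False
    have "dd (par u) < dd u" using par(2)[OF less.prems(2) False] by simp
    then have "idx Q (par u) = None" using less par(3)[OF less.prems(2) False] by blast
    then show ?thesis using idx_step[OF less.prems(2) False] by simp
  qed
qed

lemma copy: assumes r: "Q (\<phi> (x,0))" and all: "\<forall>u\<in>P. idx Q u \<noteq> None"
  shows "contains_copy {e. Q e} P"
proof -
  define \<psi> where "\<psi> u = \<phi> (u, the (idx Q u))" for u
  have pr: "u \<in> P \<Longrightarrow> (u, the (idx Q u)) \<in> blowup_vertices P x d \<and> Q (\<psi> u)" for u
    using idx_prop[of u Q "the (idx Q u)"] all unfolding \<psi>_def by auto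
  have "\<psi> ` P \<subseteq> {e. Q e}" using pr by auto
  moreover have "inj_on \<psi> P"
  proof (rule inj_onI)
    fix u v assume "u \<in> P" "v \<in> P" "\<psi> u = \<psi> v"
    then have "(u, the (idx Q u)) = (v, the (idx Q v))"
      using pr[OF \<open>u \<in> P\<close>] pr[OF \<open>v \<in> P\<close>] inj unfolding \<psi>_def inj_on_def by blast
    then show "u = v" by simp
  qed
  moreover have "\<forall>A\<in>P. \<forall>B\<in>P. A \<subseteq> B \<longrightarrow> \<psi> A \<subseteq> \<psi> B"
  proof (intro ballI impI)
    fix A B assume "A \<in> P" "B \<in> P" "A \<subseteq> B"
    show "\<psi> A \<subseteq> \<psi> B"
    proof (rule hasse_chain_mono[OF finP _ \<open>A \<in> P\<close> \<open>B \<in> P\<close> \<open>A \<subseteq> B\<close>])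
      fix A B assume h: "hasse P A B"
      then have AB: "A \<in> P" "B \<in> P" unfolding hasse_def by auto
      obtain jA jB where j: "idx Q A = Some jA" "idx Q B = Some jB" using all AB by blast
      have bv: "(A,jA) \<in> blowup_vertices P x d" "(B,jB) \<in> blowup_vertices P x d"
        using pr[OF AB(1)] pr[OF AB(2)] j by auto
      from edges_par[OF h] have "blowup_hasse P x d (A,jA) (B,jB)"
      proof
        assume c: "A \<noteq> x \<and> par A = B"
        then have "jA div d = jB" using idx_par[OF AB(1) _ j(1)] j(2) by auto
        then show ?thesis unfolding blowup_hasse_def using bv h par(2)[OF AB(1)] c by auto
      next
        assume c: "B \<noteq> x \<and> par B = A"
        then have "jB div d = jA" using idx_par[OF AB(2) _ j(2)] j(1) by auto
        then show ?thesis unfolding blowup_hasse_def using bv h par(2)[OF AB(2)] c by auto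
      qed
      moreover have "\<psi> A = \<phi> (A,jA)" "\<psi> B = \<phi> (B,jB)" using j unfolding \<psi>_def by auto
      ultimately show "\<psi> A \<subseteq> \<psi> B" using mono by auto
    qed
  qed
  ultimately show ?thesis unfolding contains_copy_def by blast
qed

lemma outcome: assumes free: "P_free P F"
  shows "Yset (\<lambda>e. e \<in> F) \<union> Nset (\<lambda>e. e \<in> F) \<noteq> {}"
    and "Yset (\<lambda>e. e \<in> F) = {} \<or> card (Nset (\<lambda>e. e \<in> F)) \<ge> d"
proof -
  let ?Q = "\<lambda>e. e \<in> F"
  have res: "Yset ?Q = {} \<and> \<phi> (x,0) \<in> Nset ?Q \<or> card (Nset ?Q) \<ge> d"
  proof (cases "?Q (\<phi> (x,0))")
    case False
    then have "\<forall>u\<in>P. idx ?Q u = None" using root_none[of ?Q] False by simp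
    then have "Yset ?Q = {}" unfolding Yset_def by auto
    moreover have "\<phi> (x,0) \<in> Nset ?Q" unfolding Nset_def
      by (rule UnI1) (simp add: idx_root False)
    ultimately show ?thesis by auto
  next
    case True
    have "\<exists>u\<in>P. idx ?Q u = None"
    proof (rule ccontr)
      assume "\<not> ?thesis"
      then have "\<forall>u\<in>P. idx ?Q u \<noteq> None" by auto
      then have "contains_copy {e. e \<in> F} P" using copy[of ?Q] True by simp
      then show False using free unfolding P_free_def by simp
    qed
    then have ex: "\<exists>k. \<exists>u\<in>P. idx ?Q u = None \<and> dd u = k" by blast
    define k where "k = (LEAST k. \<exists>u\<in>P. idx ?Q u = None \<and> dd u = k)"
    have k: "\<exists>u\<in>P. idx ?Q u = None \<and> dd u = k" unfolding k_def using ex by (rule LeastI_ex)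
    have kmin: "\<not> (\<exists>u\<in>P. idx ?Q u = None \<and> dd u = k')" if "k' < k" for k'
      using not_less_Least[of k' "\<lambda>k. \<exists>u\<in>P. idx ?Q u = None \<and> dd u = k"] that unfolding k_def by simp
    from k obtain u where u: "u \<in> P" "idx ?Q u = None" "dd u = k" by blast
    have ux: "u \<noteq> x" using u True idx_root[of ?Q] by auto
    have "dd (par u) < k" using par(2)[OF u(1) ux] u(3) by simp
    then have "idx ?Q (par u) \<noteq> None" using kmin[of "dd (par u)"] par(3)[OF u(1) ux] by auto
    then obtain i where i: "idx ?Q (par u) = Some i" by blast
    have "(\<lambda>s. \<phi> (u, i*d+s)) ` {..<d} \<subseteq> Nset ?Q"
    proof
      fix e assume "e \<in> (\<lambda>s. \<phi> (u, i*d+s)) ` {..<d}"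
      then obtain s where "s < d" "e = \<phi> (u, i*d+s)" by auto
      then show "e \<in> Nset ?Q" unfolding Nset_def
        apply (rule_tac UnI2)
        apply (unfold mem_Collect_eq)
        apply (rule exI[of _ u], rule exI[of _ i], rule exI[of _ s])
        using u ux i by simp
    qed
    moreover have "card ((\<lambda>s. \<phi> (u, i*d+s)) ` {..<d}) = d"
    proof -
      have "(par u, i) \<in> blowup_vertices P x d" using idx_prop[OF par(3)[OF u(1) ux] i] by auto
      then have il: "i < d ^ dd (par u)" unfolding blowup_vertices_def by auto
      have "inj_on (\<lambda>s. \<phi> (u, i*d+s)) {..<d}"
      proof (rule inj_onI)
        fix s t assume "s \<in> {..<d}" "t \<in> {..<d}" "\<phi> (u, i*d+s) = \<phi> (u, i*d+t)"
        then show "s = t" using inj child_bv[OF u(1) ux il] unfolding inj_on_def by fastforce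
      qed
      then show ?thesis by (simp add: card_image)
    qed
    ultimately have "d \<le> card (Nset ?Q)" using card_mono[OF YN_U(4)] by metis
    then show ?thesis by blast
  qed
  then show "Yset ?Q \<union> Nset ?Q \<noteq> {}"
  proof
    assume "Yset ?Q = {} \<and> \<phi> (x,0) \<in> Nset ?Q" then show ?thesis by blast
  next
    assume "card (Nset ?Q) \<ge> d"
    then have "card (Nset ?Q) > 0" using dpos by linarith
    then have "Nset ?Q \<noteq> {}" by (metis card.empty less_irrefl)
    then show ?thesis by blast
  qed
  show "Yset ?Q = {} \<or> card (Nset ?Q) \<ge> d" using res by auto
qed

end



lemma P_free_mono: "P_free P F \<Longrightarrow> F' \<subseteq> F \<Longrightarrow> P_free P F'"
  unfolding P_free_def contains_copy_def by (meson order_trans)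

definition cprop :: "'a set set \<Rightarrow> 'c set set \<Rightarrow> real \<Rightarrow> nat \<Rightarrow> ('c set set \<Rightarrow> 'c set set) \<Rightarrow> bool" where
  "cprop P U R D g \<longleftrightarrow> (\<forall>F \<subseteq> U. P_free P F \<longrightarrow> (\<exists>S \<subseteq> F.
      real (card S) \<le> real (card P) * real (card U) / real D \<and> F \<subseteq> g S \<and> real (card (g S)) < R + real (card S) \<and> finite (g S)))"

lemma container:
  fixes P :: "'a set set" and V :: "'c set set"
  assumes tpP: "tp P x" and finV: "finite V" and D: "D > 0"
    and hyp: "\<And>U. U \<subseteq> V \<Longrightarrow> real (card U) \<ge> R \<Longrightarrow> contains_blowup U P x D"
  shows "U \<subseteq> V \<Longrightarrow> \<exists>g. cprop P U R D g"
proof (induction "card U" arbitrary: U rule: less_induct)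
  case less
  show ?case
  proof (cases "real (card U) < R")
    case True
    have "cprop P U R D (\<lambda>_. U)" unfolding cprop_def
    proof (intro allI impI)
      fix F assume "F \<subseteq> U" "P_free P F"
      show "\<exists>S\<subseteq>F. real (card S) \<le> real (card P) * real (card U) / real D \<and> F \<subseteq> U \<and> real (card U) < R + real (card S) \<and> finite U"
        by (rule exI[of _ "{}"]) (use True \<open>F \<subseteq> U\<close> finite_subset[OF less.prems finV] in simp)
    qed
    then show ?thesis by (rule exI[of _ "\<lambda>_. U"])
  next
    case False
    then obtain \<phi> where phi: "\<phi> ` blowup_vertices P x D \<subseteq> U" "inj_on \<phi> (blowup_vertices P x D)"
      "\<And>a b. blowup_hasse P x D a b \<Longrightarrow> \<phi> a \<subseteq> \<phi> b"
      using hyp[OF less.prems] unfolding contains_blowup_def by (auto simp: not_less)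
    interpret B: bl P x D \<phi> U
      by (rule bl.intro[OF tpP], unfold_locales) (use D phi in auto)
    have ch: "\<forall>U'. \<exists>g. card U' < card U \<and> U' \<subseteq> V \<longrightarrow> cprop P U' R D g" using less.hyps by auto
    obtain G where G0: "\<forall>U'. card U' < card U \<and> U' \<subseteq> V \<longrightarrow> cprop P U' R D (G U')"
      using choice[OF ch] by auto
    have G: "\<And>U'. card U' < card U \<Longrightarrow> U' \<subseteq> V \<Longrightarrow> cprop P U' R D (G U')" using G0 by simp
    define g where "g S = B.Yset (\<lambda>e. e \<in> S) \<union> G (U - (B.Yset (\<lambda>e. e \<in> S) \<union> B.Nset (\<lambda>e. e \<in> S)))
        (S \<inter> (U - (B.Yset (\<lambda>e. e \<in> S) \<union> B.Nset (\<lambda>e. e \<in> S))))" for S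
    have finU: "finite U" using finite_subset[OF less.prems finV] .
    have "cprop P U R D g"
      unfolding cprop_def
    proof (intro allI impI)
      fix F assume FU: "F \<subseteq> U" and free: "P_free P F"
      let ?Y = "B.Yset (\<lambda>e. e \<in> F)" and ?N = "B.Nset (\<lambda>e. e \<in> F)"
      define U' where "U' = U - (?Y \<union> ?N)"
      have YF: "?Y \<subseteq> F" using B.Y_Q by auto
      have NF: "?N \<inter> F = {}" using B.N_Q by auto
      have YNU: "?Y \<subseteq> U" "?N \<subseteq> U" using B.YN_U by auto
      have finY: "finite ?Y" "finite ?N" using B.YN_U by auto
      have ne: "?Y \<union> ?N \<noteq> {}" using B.outcome(1)[OF free] .
      have YN: "?Y \<inter> ?N = {}" using YF NF by auto
      have cU'eq: "card U' = card U - card ?Y - card ?N" and cYN: "card ?Y + card ?N \<le> card U"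
      proof -
        have "card (?Y \<union> ?N) = card ?Y + card ?N" using card_Un_disjoint[OF finY YN] .
        moreover have "card (?Y \<union> ?N) \<le> card U" using YNU finU by (intro card_mono) auto
        moreover have "card U' = card U - card (?Y \<union> ?N)" unfolding U'_def
          using YNU finU by (subst card_Diff_subset) (auto intro: rev_finite_subset)
        ultimately show "card U' = card U - card ?Y - card ?N" "card ?Y + card ?N \<le> card U" by auto
      qed
      have cYN0: "card ?Y + card ?N > 0" using ne finY by (simp add: card_gt_0_iff)
      have cU': "card U' < card U" using cU'eq cYN cYN0 by linarith
      have U'V: "U' \<subseteq> V" using less.prems unfolding U'_def by auto
      have cp: "cprop P U' R D (G U')" using G[OF cU' U'V] .
      define F' where "F' = F \<inter> U'"
      have F'U': "F' \<subseteq> U'" unfolding F'_def by auto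
      have free': "P_free P F'" using P_free_mono[OF free] unfolding F'_def by auto
      obtain S' where S': "S' \<subseteq> F'" "real (card S') \<le> real (card P) * real (card U') / real D"
        "F' \<subseteq> G U' S'" "real (card (G U' S')) < R + real (card S')" "finite (G U' S')"
        using cp F'U' free' unfolding cprop_def by auto
      define S where "S = S' \<union> ?Y"
      have SF: "S \<subseteq> F" using S'(1) YF unfolding S_def F'_def by auto
      have agree: "(e \<in> S) = (e \<in> F)" if "e \<in> ?Y \<union> ?N" for e
        using that SF YF NF unfolding S_def by auto
      have eqs: "B.Yset (\<lambda>e. e \<in> S) = ?Y" "B.Nset (\<lambda>e. e \<in> S) = ?N"
        using B.determ_sets[where Q="\<lambda>e. e \<in> F" and Q'="\<lambda>e. e \<in> S"] agree by auto
      have SU': "S \<inter> U' = S'" using S'(1) F'U' unfolding S_def U'_def by auto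
      have gS: "g S = ?Y \<union> G U' S'" unfolding g_def eqs U'_def[symmetric] SU' ..
      have finS': "finite S'" using S'(1) F'U' finU unfolding U'_def by (meson Diff_subset finite_subset subset_trans)
      have S'Y: "S' \<inter> ?Y = {}" using S'(1) F'U' unfolding U'_def by auto
      have cS: "card S = card S' + card ?Y" unfolding S_def using card_Un_disjoint[OF finS' finY(1) S'Y] .
      show "\<exists>S\<subseteq>F. real (card S) \<le> real (card P) * real (card U) / real D \<and> F \<subseteq> g S \<and>
          real (card (g S)) < R + real (card S) \<and> finite (g S)"
      proof (intro exI[of _ S] conjI SF)
        show "finite (g S)" unfolding gS using S'(5) finY by simp
        show "F \<subseteq> g S" unfolding gS using S'(3) YF NF FU unfolding F'_def U'_def by auto
        have "card (g S) \<le> card ?Y + card (G U' S')" unfolding gS by (rule card_Un_le)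
        then show "real (card (g S)) < R + real (card S)" using S'(4) cS by linarith
        have cY: "card ?Y \<le> card P" by (rule B.card_Y)
        have gain: "?Y = {} \<or> card ?N \<ge> D" by (rule B.outcome(2)[OF free])
        have Dp: "real D > 0" using D by simp
        have key: "real (card ?Y) * real D \<le> real (card P) * real (card ?N)"
        proof (cases "?Y = {}")
          case True then show ?thesis by simp
        next
          case False
          then have "card ?N \<ge> D" using gain by auto
          then have "real (card ?N) \<ge> real D" by simp
          moreover have "real (card ?Y) \<le> real (card P)" using cY by simp
          ultimately show ?thesis by (intro mult_mono) auto
        qed
        have cU'r: "real (card U') = real (card U) - real (card ?Y) - real (card ?N)"
          using cU'eq cYN by simp
        have "real (card S) = real (card S') + real (card ?Y)" using cS by simp
        also have "\<dots> \<le> real (card P) * real (card U') / real D + real (card ?Y)" using S'(2) by simp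
        also have "\<dots> \<le> real (card P) * real (card U) / real D"
        proof -
          have "real (card P) * real (card U') + real (card ?Y) * real D \<le> real (card P) * real (card U)"
          proof -
            have e: "real (card P) * real (card U) = real (card P) * real (card U') + real (card P) * real (card ?N) + real (card P) * real (card ?Y)"
            proof -
              have "real (card U) = real (card U') + real (card ?N) + real (card ?Y)" using cU'r by simp
              then show ?thesis by (simp add: distrib_left)
            qed
            have "0 \<le> real (card P) * real (card ?Y)" by simp
            then show ?thesis using e key by linarith
          qed
          moreover have "real (card P) * real (card U') / real D + real (card ?Y) = (real (card P) * real (card U') + real (card ?Y) * real D) / real D"
            using Dp by (simp add: field_simps)
          ultimately show ?thesis using Dp by (simp add: divide_right_mono mult.commute)
        qed
        finally show "real (card S) \<le> real (card P) * real (card U) / real D" .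
      qed
    qed
    then show ?thesis by (rule exI[of _ g])
  qed
qed




lemma sum_binom_bound:
  assumes m1: "1 \<le> m" and mN: "m \<le> N"
  shows "(\<Sum>k\<le>m. real (N choose k)) \<le> (real N / real m) ^ m * exp (real m)"
proof -
  define l where "l = real m / real N"
  have l0: "0 < l" and l1: "l \<le> 1" using m1 mN unfolding l_def by auto
  have "(\<Sum>k\<le>m. real (N choose k)) \<le> (\<Sum>k\<le>m. real (N choose k) * (l ^ k / l ^ m))"
  proof (rule sum_mono)
    fix k assume "k \<in> {..m}"
    then have "l ^ m \<le> l ^ k" using l0 l1 by (intro power_decreasing) auto
    then have "1 \<le> l ^ k / l ^ m" using l0 by simp
    then show "real (N choose k) \<le> real (N choose k) * (l ^ k / l ^ m)"
      by (metis mult.right_neutral mult_left_mono of_nat_0_le_iff)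
  qed
  also have "\<dots> = (\<Sum>k\<le>m. real (N choose k) * l ^ k) / l ^ m"
    by (simp add: sum_divide_distrib)
  also have "\<dots> \<le> (\<Sum>k\<le>N. real (N choose k) * l ^ k) / l ^ m"
    using l0 mN by (intro divide_right_mono sum_mono2) auto
  also have "(\<Sum>k\<le>N. real (N choose k) * l ^ k) = (l + 1) ^ N"
    using binomial_ring[of l 1 N] by simp
  finally have A: "(\<Sum>k\<le>m. real (N choose k)) \<le> (l + 1) ^ N / l ^ m" .
  have "(l + 1) ^ N \<le> exp l ^ N"
    using l0 by (intro power_mono) (auto simp: add.commute)
  also have "exp l ^ N = exp (real m)"
    using mN m1 unfolding l_def by (simp add: exp_of_nat_mult[symmetric])
  finally have B: "(l + 1) ^ N / l ^ m \<le> exp (real m) / l ^ m" using l0 by (simp add: divide_right_mono)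
  have C: "exp (real m) / l ^ m = (real N / real m) ^ m * exp (real m)" unfolding l_def by (simp add: power_divide)
  show ?thesis using A B C by linarith
qed

lemma card_small_subsets:
  assumes fin: "finite V" and m1: "1 \<le> m" and mN: "m \<le> card V"
  shows "real (card {S. S \<subseteq> V \<and> card S \<le> m}) \<le> (real (card V) / real m) ^ m * exp (real m)"
proof -
  have eq: "{S. S \<subseteq> V \<and> card S \<le> m} = (\<Union>k\<in>{..m}. {S. S \<subseteq> V \<and> card S = k})" by auto
  have "card {S. S \<subseteq> V \<and> card S \<le> m} \<le> (\<Sum>k\<le>m. card {S. S \<subseteq> V \<and> card S = k})"
    unfolding eq by (rule card_UN_le) simp
  also have "\<dots> = (\<Sum>k\<le>m. card V choose k)" using n_subsets[OF fin] by simp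
  finally have "real (card {S. S \<subseteq> V \<and> card S \<le> m}) \<le> (\<Sum>k\<le>m. real (card V choose k))"
    by (metis of_nat_le_iff of_nat_sum)
  also have "\<dots> \<le> (real (card V) / real m) ^ m * exp (real m)" by (rule sum_binom_bound[OF m1 mN])
  finally show ?thesis .
qed

lemma central_aux: "1 \<le> k \<Longrightarrow> (16::nat) ^ k \<le> 4 * k * ((2*k) choose k)^2"
proof (induction k rule: dec_induct)
  case base then show ?case by (simp add: numeral_eq_Suc)
next
  case (step k)
  let ?b = "(2*k) choose k" and ?c = "(2*k+1) choose k" and ?b' = "(2*(k+1)) choose (k+1)"
  have e1: "(k+1) * ?b' = (2*k+2) * ?c"
    using binomial_absorption[of k "2*k+2"] by (simp add: algebra_simps)
  have e2: "(k+1) * ?c = (2*k+1) * ?b"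
  proof -
    have "Suc k * ((2*k+1) choose Suc k) = (2*k+1) * ?b"
      using binomial_absorption[of k "2*k+1"] by simp
    moreover have "(2*k+1) choose Suc k = ?c"
      using binomial_symmetric[of k "2*k+1"] by simp
    ultimately show ?thesis by simp
  qed
  have "(k+1) * ?b' = (k+1) * (2 * ?c)" using e1 by (simp add: algebra_simps)
  then have e3: "?b' = 2 * ?c" by (metis mult_left_cancel add_is_0 one_neq_zero)
  have e4: "(k+1) * ?b' = 2 * (2*k+1) * ?b" unfolding e3 using e2 by (simp add: algebra_simps)
  have "16 ^ (k+1) * (k+1) = 16 * (16^k * (k+1))" by simp
  also have "\<dots> \<le> 16 * (4 * k * ?b^2 * (k+1))" using mult_right_mono[OF step.IH, of "k+1"] by simp
  also have "\<dots> \<le> 16 * ((2*k+1)^2 * ?b^2)"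
  proof -
    have "4 * k * (k+1) \<le> (2*k+1)^2" by (simp add: power2_eq_square algebra_simps)
    then have "4 * k * (k+1) * ?b^2 \<le> (2*k+1)^2 * ?b^2" by (rule mult_right_mono) simp
    then show ?thesis by (simp add: algebra_simps)
  qed
  also have "\<dots> = 4 * ((k+1) * ?b')^2" unfolding e4 by (simp add: power2_eq_square algebra_simps)
  also have "\<dots> = (4 * (k+1) * ?b'^2) * (k+1)" by (simp add: power2_eq_square algebra_simps)
  finally show ?case by (simp del: mult_Suc mult_Suc_right)
qed


lemma central_nat: "1 \<le> n \<Longrightarrow> (4::nat) ^ n \<le> 16 * n * (n choose (n div 2))^2"
proof -
  assume n1: "1 \<le> n"
  define k where "k = n div 2"
  have k: "n = 2*k \<or> n = 2*k+1" unfolding k_def by presburger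
  then show ?thesis
  proof
    assume nk: "n = 2*k"
    then have k1: "1 \<le> k" using n1 by simp
    have "(4::nat) ^ n = 16 ^ k" unfolding nk by (simp add: power_mult)
    also have "\<dots> \<le> 4 * k * ((2*k) choose k)^2" by (rule central_aux[OF k1])
    also have "\<dots> \<le> 16 * n * (n choose (n div 2))^2" unfolding nk by simp
    finally show ?thesis .
  next
    assume nk: "n = 2*k+1"
    show ?thesis
    proof (cases "k = 0")
      case True then show ?thesis using nk by simp
    next
      case False
      then have k1: "1 \<le> k" by simp
      let ?b = "(2*k) choose k" and ?c = "(2*k+1) choose k"
      have e2: "(k+1) * ?c = (2*k+1) * ?b"
      proof -
        have "Suc k * ((2*k+1) choose Suc k) = (2*k+1) * ?b"
          using binomial_absorption[of k "2*k+1"] by simp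
        moreover have "(2*k+1) choose Suc k = ?c"
          using binomial_symmetric[of k "2*k+1"] by simp
        ultimately show ?thesis by simp
      qed
      have "(k+1) * ?b \<le> (k+1) * ?c" unfolding e2 by (intro mult_right_mono) auto
      then have bc: "?b \<le> ?c" by (simp only: mult_le_cancel1)
      have nd: "n div 2 = k" using nk by simp
      have "(4::nat) ^ n = 4 * 16 ^ k" unfolding nk by (simp add: power_mult)
      also have "\<dots> \<le> 4 * (4 * k * ?b^2)" using central_aux[OF k1] by simp
      also have "\<dots> \<le> 16 * n * ?c^2"
      proof -
        have "?b^2 \<le> ?c^2" using bc by (rule power_mono) simp
        moreover have "16 * k \<le> 16 * n" using nk by simp
        ultimately have "(16 * k) * ?b^2 \<le> (16 * n) * ?c^2" by (metis mult_le_mono)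
        then show ?thesis by (simp add: algebra_simps)
      qed
      finally show ?thesis unfolding nd nk by simp
    qed
  qed
qed

lemma central_bound: "1 \<le> n \<Longrightarrow> (2::real) ^ n \<le> 4 * sqrt (real n) * real (n choose (n div 2))"
proof -
  assume n1: "1 \<le> n"
  have "real ((4::nat) ^ n) \<le> real (16 * n * (n choose (n div 2))^2)"
    using central_nat[OF n1] by (simp only: of_nat_le_iff)
  then have "((2::real) ^ n)^2 \<le> (4 * sqrt (real n) * real (n choose (n div 2)))^2"
  proof -
    have e1: "((2::real) ^ n)^2 = real ((4::nat) ^ n)"
      by (simp add: power_mult[symmetric] mult.commute[of n 2]) (simp add: power_mult)
    have e2: "(4 * sqrt (real n) * real (n choose (n div 2)))^2 = real (16 * n * (n choose (n div 2))^2)"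
      by (simp add: power_mult_distrib)
    show ?thesis using \<open>real ((4::nat) ^ n) \<le> _\<close> unfolding e1 e2 .
  qed
  then show ?thesis by (rule power2_le_imp_le) simp
qed

lemma prod_ge: "(a::real) * b \<ge> 0 \<Longrightarrow> (1 - a) * (1 - b) \<ge> 1 - a - b"
  by (simp add: algebra_simps)

lemma layer_binom:
  assumes m0: "0 < m" and mn: "2*m \<le> n"
  shows "j \<le> m \<Longrightarrow> real (n choose (m+j)) \<ge> real (n choose m) * (1 - 2 * real j ^ 2 / real m)"
proof (induction j)
  case 0 then show ?case by simp
next
  case (Suc j)
  let ?X = "real (n choose (m+j))" and ?X' = "real (n choose (m+j+1))" and ?B = "real (n choose m)"
  have jm: "j < m" using Suc.prems by simp
  have IH: "?X \<ge> ?B * (1 - 2 * real j ^ 2 / real m)" using Suc.IH Suc.prems by simp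
  have rec: "real (m+j+1) * ?X' = real (n - (m+j)) * ?X"
  proof -
    have "Suc (m+j) * (n choose Suc (m+j)) = (n - (m+j)) * (n choose (m+j))"
      using binomial_absorption[of "m+j" n] binomial_absorb_comp[of n "m+j"] by simp
    then show ?thesis by (metis Suc_eq_plus1 add.assoc of_nat_mult)
  qed
  define r where "r = (real m - real j) / real (m+j+1)"
  have r0: "0 \<le> r" unfolding r_def using jm by simp
  have r1: "r \<ge> 1 - (2 * real j + 1) / real m"
  proof -
    have "r = 1 - (2 * real j + 1) / real (m+j+1)" unfolding r_def by (simp add: field_simps)
    moreover have "(2 * real j + 1) / real (m+j+1) \<le> (2 * real j + 1) / real m"
      using m0 by (intro divide_left_mono) auto
    ultimately show ?thesis by linarith
  qed
  have X'r: "?X' \<ge> ?X * r"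
  proof -
    have "real (n - (m+j)) \<ge> real m - real j" using mn jm by simp
    then have "real (n - (m+j)) * ?X \<ge> (real m - real j) * ?X" by (intro mult_right_mono) auto
    then have "real (m+j+1) * ?X' \<ge> (real m - real j) * ?X" using rec by simp
    then show ?thesis unfolding r_def by (simp add: field_simps)
  qed
  have B0: "?B \<ge> 0" by simp
  have key: "2 * real j ^ 2 + (2 * real j + 1) \<le> 2 * real (Suc j) ^ 2" by (simp add: power2_eq_square algebra_simps)
  show ?case
  proof (cases "1 - 2 * real j ^ 2 / real m \<ge> 0")
    case True
    let ?a = "2 * real j ^ 2 / real m" and ?b = "(2 * real j + 1) / real m"
    have "?X * r \<ge> ?B * (1 - ?a) * r" using IH r0 by (intro mult_right_mono) auto
    moreover have "?B * (1 - ?a) * r \<ge> ?B * (1 - ?a) * (1 - ?b)"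
      using r1 True B0 by (intro mult_left_mono) auto
    moreover have "(1 - ?a) * (1 - ?b) \<ge> 1 - ?a - ?b"
      using prod_ge[of ?a ?b] m0 by simp
    moreover have "1 - ?a - ?b \<ge> 1 - 2 * real (Suc j) ^ 2 / real m"
    proof -
      have "?a + ?b = (2 * real j ^ 2 + (2 * real j + 1)) / real m" by (simp add: add_divide_distrib)
      also have "\<dots> \<le> 2 * real (Suc j) ^ 2 / real m" using key m0 by (intro divide_right_mono) auto
      finally show ?thesis by linarith
    qed
    ultimately have c1: "?X' \<ge> ?B * (1 - ?a) * (1 - ?b)" and c2: "(1 - ?a) * (1 - ?b) \<ge> 1 - 2 * real (Suc j) ^ 2 / real m"
      using X'r by linarith+
    have "?B * ((1 - ?a) * (1 - ?b)) \<ge> ?B * (1 - 2 * real (Suc j) ^ 2 / real m)"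
      using c2 B0 by (rule mult_left_mono)
    then have "?X' \<ge> ?B * (1 - 2 * real (Suc j) ^ 2 / real m)" using c1 by (simp add: mult.assoc)
    then show ?thesis by simp
  next
    case False
    have "1 - 2 * real (Suc j) ^ 2 / real m \<le> 0"
    proof -
      have "2 * real j ^ 2 / real m \<le> 2 * real (Suc j) ^ 2 / real m"
        using m0 by (intro divide_right_mono) (auto simp: power_mono)
      then show ?thesis using False by linarith
    qed
    then have "?B * (1 - 2 * real (Suc j) ^ 2 / real m) \<le> 0" using B0 by (simp add: mult_nonneg_nonpos)
    moreover have "?X' \<ge> 0" by simp
    ultimately show ?thesis by simp
  qed
qed




lemma height_facts: assumes tr: "tree_poset P"
  shows "1 \<le> height P" "\<exists>C. C \<subseteq> P \<and> is_chain C \<and> card C = height P"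
proof -
  let ?S = "{card C | C. C \<subseteq> P \<and> is_chain C}"
  have finP: "finite P" and ne: "P \<noteq> {}" using tr unfolding tree_poset_def is_poset_def by auto
  have "?S \<subseteq> {..card P}" using finP by (auto intro: card_mono)
  then have fS: "finite ?S" by (rule finite_subset) simp
  obtain a where a: "a \<in> P" using ne by auto
  have "is_chain {a}" unfolding is_chain_def by simp
  then have "card {a} \<in> ?S" using a by blast
  then have oneS: "1 \<in> ?S" by simp
  then have neS: "?S \<noteq> {}" by auto
  show "1 \<le> height P" unfolding height_def using Max_ge[OF fS oneS] .
  have "height P \<in> ?S" unfolding height_def using Max_in[OF fS neS] .
  then show "\<exists>C. C \<subseteq> P \<and> is_chain C \<and> card C = height P" by auto
qed

lemma layers_free:
  assumes tr: "tree_poset P"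
    and FL: "F \<subseteq> {A. A \<subseteq> {1..(n::nat)} \<and> card A \<in> {m..<m + (height P - 1)}}"
  shows "P_free P F"
  unfolding P_free_def
proof
  assume "contains_copy F P"
  then obtain \<psi> where psi: "\<psi> ` P \<subseteq> F" "inj_on \<psi> P" "\<forall>A\<in>P. \<forall>B\<in>P. A \<subseteq> B \<longrightarrow> \<psi> A \<subseteq> \<psi> B"
    unfolding contains_copy_def by auto
  obtain C where C: "C \<subseteq> P" "is_chain C" "card C = height P" using height_facts(2)[OF tr] by auto
  have h1: "1 \<le> height P" using height_facts(1)[OF tr] .
  have finP: "finite P" using tr unfolding tree_poset_def is_poset_def by auto
  let ?K = "\<psi> ` C"
  have cK: "card ?K = height P" using C card_image inj_on_subset[OF psi(2) C(1)] by metis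
  have KF: "?K \<subseteq> F" using psi(1) C(1) by auto
  have finK: "finite A" if "A \<in> ?K" for A
  proof -
    have "A \<subseteq> {1..n}" using KF FL that by auto
    then show ?thesis by (rule finite_subset) simp
  qed
  have "inj_on card ?K"
  proof (rule inj_onI)
    fix A B assume A: "A \<in> ?K" and B: "B \<in> ?K" and cAB: "card A = card B"
    obtain a b where ab: "a \<in> C" "b \<in> C" "A = \<psi> a" "B = \<psi> b" using A B by auto
    have "a \<subseteq> b \<or> b \<subseteq> a" using C(2) ab unfolding is_chain_def by auto
    then have "A \<subseteq> B \<or> B \<subseteq> A" using psi(3) ab C(1) by auto
    then show "A = B" using cAB finK[OF A] finK[OF B] by (metis card_subset_eq)
  qed
  then have "card (card ` ?K) = height P" using cK card_image by metis
  moreover have "card ` ?K \<subseteq> {m..<m + (height P - 1)}"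
  proof
    fix k assume "k \<in> card ` ?K"
    then obtain A where "A \<in> ?K" "k = card A" by auto
    then have "A \<in> F" using KF by auto
    then show "k \<in> {m..<m + (height P - 1)}" using FL \<open>k = card A\<close> by auto
  qed
  ultimately have "height P \<le> height P - 1" by (metis card_atLeastLessThan card_mono finite_atLeastLessThan diff_add_inverse)
  then show False using h1 by simp
qed


lemma fam_finite: "finite {F. F \<subseteq> Pow {1..(n::nat)} \<and> P_free P F}"
  by (rule finite_subset[of _ "Pow (Pow {1..n})"]) auto

lemma cancel_aux: "(b::real) > 0 \<Longrightarrow> h * x = h * (b * x) / b"
  by simp

lemma lower:
  fixes P :: "'a set set"
  assumes tr: "tree_poset P" and m0: "0 < n div 2" and Hm: "height P - 1 \<le> n div 2"
  shows "real (height P - 1) * (1 - 2 * real (height P - 1)^2 / real (n div 2))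
     \<le> log 2 (real (card {F. F \<subseteq> Pow {1..n} \<and> P_free P F})) / real (n choose (n div 2))"
proof -
  define H where "H = height P - 1"
  let ?H = H and ?m = "n div 2" and ?B = "real (n choose (n div 2))"
  have Hm: "H \<le> n div 2" using Hm unfolding H_def .
  define L where "L = {A. A \<subseteq> {1..n} \<and> card A \<in> {?m..<?m + ?H}}"
  have Leq: "L = (\<Union>j\<in>{..<?H}. {A. A \<subseteq> {1..n} \<and> card A = ?m + j})"
  proof (intro set_eqI iffI)
    fix A assume "A \<in> L"
    then have A: "A \<subseteq> {1..n}" "?m \<le> card A" "card A < ?m + ?H" unfolding L_def by auto
    then have "card A - ?m < ?H" "card A = ?m + (card A - ?m)" by auto
    then show "A \<in> (\<Union>j\<in>{..<?H}. {A. A \<subseteq> {1..n} \<and> card A = ?m + j})" using A(1) by blast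
  next
    fix A assume "A \<in> (\<Union>j\<in>{..<?H}. {A. A \<subseteq> {1..n} \<and> card A = ?m + j})"
    then show "A \<in> L" unfolding L_def by auto
  qed
  have "card L = (\<Sum>j<?H. card {A. A \<subseteq> {1..n} \<and> card A = ?m + j})"
    unfolding Leq by (rule card_UN_disjoint) auto
  also have "\<dots> = (\<Sum>j<?H. n choose (?m + j))" using n_subsets[of "{1..n}"] by simp
  finally have cL: "real (card L) = (\<Sum>j<?H. real (n choose (?m + j)))" by simp
  have "(\<Sum>j<?H. ?B * (1 - 2 * real ?H^2 / real ?m)) \<le> (\<Sum>j<?H. real (n choose (?m + j)))"
  proof (rule sum_mono)
    fix j assume "j \<in> {..<?H}"
    then have jH: "j < ?H" by simp
    have "?B * (1 - 2 * real j ^ 2 / real ?m) \<le> real (n choose (?m + j))"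
      using layer_binom[OF m0, of n j] jH Hm by simp
    moreover have "?B * (1 - 2 * real ?H^2 / real ?m) \<le> ?B * (1 - 2 * real j ^ 2 / real ?m)"
    proof -
      have "real j ^ 2 \<le> real ?H ^ 2" using jH by (intro power_mono) auto
      then have "2 * real j ^ 2 / real ?m \<le> 2 * real ?H^2 / real ?m" using m0 by (intro divide_right_mono) auto
      then show ?thesis by (intro mult_left_mono) auto
    qed
    ultimately show "?B * (1 - 2 * real ?H^2 / real ?m) \<le> real (n choose (?m + j))" by linarith
  qed
  then have cLb: "real ?H * (?B * (1 - 2 * real ?H^2 / real ?m)) \<le> real (card L)" using cL by simp
  have LP: "L \<subseteq> Pow {1..n}" unfolding L_def by auto
  have finL: "finite L" using LP by (rule finite_subset) simp
  have "Pow L \<subseteq> {F. F \<subseteq> Pow {1..n} \<and> P_free P F}"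
  proof
    fix F assume "F \<in> Pow L"
    then have "F \<subseteq> L" by simp
    then show "F \<in> {F. F \<subseteq> Pow {1..n} \<and> P_free P F}"
      using LP layers_free[OF tr, of F n ?m] unfolding L_def H_def by auto
  qed
  then have "card (Pow L) \<le> card {F. F \<subseteq> Pow {1..n} \<and> P_free P F}"
    by (rule card_mono[OF fam_finite])
  then have c2: "(2::real) ^ card L \<le> real (card {F. F \<subseteq> Pow {1..n} \<and> P_free P F})"
    using card_Pow[of L] finL by (metis of_nat_le_iff of_nat_numeral of_nat_power)
  have "real (card L) = log 2 ((2::real) ^ card L)" by (simp add: log_nat_power)
  also have "\<dots> \<le> log 2 (real (card {F. F \<subseteq> Pow {1..n} \<and> P_free P F}))"
  proof -
    have "(0::real) < 2 ^ card L" by simp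
    then have "0 < real (card {F. F \<subseteq> Pow {1..n} \<and> P_free P F})" using c2 by linarith
    then show ?thesis using c2 by (intro log_le_cancel_iff[THEN iffD2]) auto
  qed
  finally have lg: "real (card L) \<le> log 2 (real (card {F. F \<subseteq> Pow {1..n} \<and> P_free P F}))" .
  have Bp: "?B > 0" by (simp del: binomial_eq_0_iff add: zero_less_binomial_iff)
  have "real ?H * (1 - 2 * real ?H^2 / real ?m) = real ?H * (?B * (1 - 2 * real ?H^2 / real ?m)) / ?B"
    using cancel_aux[OF Bp] by metis
  also have "\<dots> \<le> log 2 (real (card {F. F \<subseteq> Pow {1..n} \<and> P_free P F})) / ?B"
    using cLb lg Bp by (intro divide_right_mono) auto
  finally show ?thesis unfolding H_def .
qed


lemma P_free_empty: "tree_poset P \<Longrightarrow> P_free P {}"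
  unfolding P_free_def contains_copy_def tree_poset_def by auto

lemma card_Pow_le: "real (card (Pow A)) \<le> 2 powr real (card A)"
proof (cases "finite A")
  case True then show ?thesis by (simp add: card_Pow powr_realpow)
next
  case False then show ?thesis by simp
qed

lemma upper:
  fixes P :: "'a set set" and x :: "'a set"
  assumes tr: "tree_poset P" and xP: "x \<in> P" and dl: "\<delta> > 0" and n1: "1 \<le> n"
    and big: "\<delta> * real n \<ge> 4 * real (card P) + 2"
    and hyp: "\<forall>F. F \<subseteq> Pow {1..n} \<and> real (card F) \<ge> (real (height P) - 1 + \<epsilon>) * real (n choose (n div 2))
                 \<longrightarrow> contains_blowup F P x (nat \<lfloor>\<delta> * real n\<rfloor>)"
  shows "log 2 (real (card {F. F \<subseteq> Pow {1..n} \<and> P_free P F})) / real (n choose (n div 2))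
    \<le> (real (height P) - 1 + \<epsilon>) + (8 * real (card P) / \<delta> * sqrt (real n) / real n + 4 * sqrt (real n) / 2^n)
         * (1 + (ln \<delta> + ln (real n) + 1) / ln 2)"
proof -
  define V where "V = Pow {1..n}"
  define N where "N = card V"
  have N: "N = 2^n" unfolding N_def V_def by (simp add: card_Pow)
  have finV: "finite V" unfolding V_def by simp
  define Bn where "Bn = real (n choose (n div 2))"
  have Bp: "Bn > 0" unfolding Bn_def by (simp del: binomial_eq_0_iff add: zero_less_binomial_iff)
  define R where "R = (real (height P) - 1 + \<epsilon>) * Bn"
  define D where "D = nat \<lfloor>\<delta> * real n\<rfloor>"
  define cP where "cP = card P"
  have finP: "finite P" and Pne: "P \<noteq> {}" using tr unfolding tree_poset_def is_poset_def by auto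
  have cP1: "real cP \<ge> 1" unfolding cP_def using finP Pne by (simp add: Suc_leI card_gt_0_iff)
  have y0: "\<delta> * real n \<ge> 0" using dl by simp
  have fl0: "\<lfloor>\<delta> * real n\<rfloor> \<ge> 0" using y0 by simp
  have Deq: "real D = real_of_int \<lfloor>\<delta> * real n\<rfloor>" unfolding D_def using fl0 by simp
  have fc: "real_of_int \<lfloor>\<delta> * real n\<rfloor> \<le> \<delta> * real n \<and> \<delta> * real n < real_of_int (\<lfloor>\<delta> * real n\<rfloor> + 1)"
    by (rule floor_correct)
  have Dle: "real D \<le> \<delta> * real n" using Deq fc by linarith
  have Dge: "real D \<ge> \<delta> * real n - 1" using Deq fc by simp
  have Dge2: "real D \<ge> \<delta> * real n / 2" using Dge big by linarith
  have D2cP: "real D \<ge> 2 * real cP + 1" using Dge2 big unfolding cP_def by linarith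
  have Dp: "D > 0" using D2cP by simp
  have tpP: "tp P x" by (unfold_locales) (fact tr, fact xP)
  have hyp': "\<And>U. U \<subseteq> V \<Longrightarrow> real (card U) \<ge> R \<Longrightarrow> contains_blowup U P x D"
  proof -
    fix U assume "U \<subseteq> V" "real (card U) \<ge> R"
    then show "contains_blowup U P x D" using hyp[rule_format, of U] unfolding V_def R_def Bn_def D_def by simp
  qed
  have "\<exists>g. cprop P V R D g" by (rule container[OF tpP finV Dp hyp' subset_refl])
  then obtain g where g: "cprop P V R D g" by (rule exE)
  define M where "M = real cP * real N / real D"
  define m where "m = nat \<lceil>M\<rceil>"
  have "(2::nat)^1 \<le> 2^n" by (rule power_increasing) (use n1 in auto)
  then have N2: "real N \<ge> 2" unfolding N by (metis of_nat_le_iff of_nat_numeral power_one_right)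
  have Mp: "M > 0" unfolding M_def using cP1 N2 Dp by simp
  have mM: "real m \<ge> M" "real m < M + 1" unfolding m_def using Mp by linarith+
  have m1: "1 \<le> m" using mM Mp by linarith
  have MN: "M \<le> real N / 2"
  proof -
    have "real cP / real D \<le> 1 / 2" using D2cP Dp by (simp add: divide_simps)
    then have "real cP / real D * real N \<le> 1 / 2 * real N" using N2 by (intro mult_right_mono) auto
    then show ?thesis unfolding M_def by simp
  qed
  have mN: "m \<le> N" using mM MN N2 by linarith
  define SS where "SS = {S. S \<subseteq> V \<and> card S \<le> m \<and> real (card (g S)) < R + real (card S) \<and> finite (g S)}"
  have "SS \<subseteq> Pow V" unfolding SS_def by auto
  then have finSS: "finite SS" by (rule finite_subset) (simp add: finV)
  define Fam where "Fam = {F. F \<subseteq> Pow {1..n} \<and> P_free P F}"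
  have FamSub: "Fam \<subseteq> (\<Union>S\<in>SS. Pow (g S))"
  proof
    fix F assume "F \<in> Fam"
    then have F: "F \<subseteq> V" "P_free P F" unfolding Fam_def V_def by auto
    have "\<exists>S\<subseteq>F. real (card S) \<le> real (card P) * real (card V) / real D \<and>
      F \<subseteq> g S \<and> real (card (g S)) < R + real (card S) \<and> finite (g S)"
      using g F unfolding cprop_def by simp
    then obtain S where S: "S \<subseteq> F" "real (card S) \<le> real (card P) * real (card V) / real D"
      "F \<subseteq> g S" "real (card (g S)) < R + real (card S)" "finite (g S)"
      by (elim exE conjE) (intro that)
    have "real (card S) \<le> real m" using S(2) mM unfolding M_def cP_def N_def by linarith
    then have "card S \<le> m" by simp
    then have "S \<in> SS" unfolding SS_def using S F by auto
    then show "F \<in> (\<Union>S\<in>SS. Pow (g S))" using S(3) by auto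
  qed
  have finU: "finite (\<Union>S\<in>SS. Pow (g S))" using finSS unfolding SS_def by auto
  have "card Fam \<le> card (\<Union>S\<in>SS. Pow (g S))" by (rule card_mono[OF finU FamSub])
  also have "\<dots> \<le> (\<Sum>S\<in>SS. card (Pow (g S)))" by (rule card_UN_le[OF finSS])
  finally have cF1: "real (card Fam) \<le> (\<Sum>S\<in>SS. real (card (Pow (g S))))" by (metis of_nat_le_iff of_nat_sum)
  also have "\<dots> \<le> (\<Sum>S\<in>SS. 2 powr (R + real m))"
  proof (rule sum_mono)
    fix S assume "S \<in> SS"
    then have "real (card (g S)) \<le> R + real m" unfolding SS_def by auto
    then have "2 powr real (card (g S)) \<le> 2 powr (R + real m)" by simp
    then show "real (card (Pow (g S))) \<le> 2 powr (R + real m)" using card_Pow_le[of "g S"] by linarith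
  qed
  also have "\<dots> = real (card SS) * 2 powr (R + real m)" by simp
  also have "\<dots> \<le> (real N / real m) ^ m * exp (real m) * 2 powr (R + real m)"
  proof -
    have "SS \<subseteq> {S. S \<subseteq> V \<and> card S \<le> m}" unfolding SS_def by auto
    then have "card SS \<le> card {S. S \<subseteq> V \<and> card S \<le> m}"
      by (rule card_mono[rotated]) (rule finite_subset[of _ "Pow V"], auto simp: finV)
    then have "real (card SS) \<le> (real N / real m) ^ m * exp (real m)"
      using card_small_subsets[OF finV m1 mN[unfolded N_def]] unfolding N_def by linarith
    then show ?thesis by (intro mult_right_mono) auto
  qed
  finally have cF: "real (card Fam) \<le> (real N / real m) ^ m * exp (real m) * 2 powr (R + real m)" .
  have "{} \<in> Fam" unfolding Fam_def using P_free_empty[OF tr] by simp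
  then have "card Fam \<ge> 1" using fam_finite[of n P] unfolding Fam_def by (metis One_nat_def Suc_leI card_gt_0_iff empty_iff)
  then have F1: "real (card Fam) \<ge> 1" by simp
  have Nm0: "real N / real m > 0" using N2 m1 by simp
  have lgF: "log 2 (real (card Fam)) \<le> real m * log 2 (real N / real m) + real m / ln 2 + (R + real m)"
  proof -
    have "log 2 (real (card Fam)) \<le> log 2 ((real N / real m) ^ m * exp (real m) * 2 powr (R + real m))"
      using cF F1 by (intro log_le_cancel_iff[THEN iffD2]) auto
    also have "\<dots> = log 2 ((real N / real m) ^ m) + log 2 (exp (real m)) + log 2 (2 powr (R + real m))"
    proof -
      have "real N / real m \<noteq> 0" using Nm0 by linarith
      then have p1: "(real N / real m) ^ m \<noteq> 0" by (rule power_not_zero)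
      have p2: "exp (real m) \<noteq> 0" by simp
      have p3: "2 powr (R + real m) \<noteq> 0" by simp
      show ?thesis using p1 p2 p3 by (simp only: log_mult if_True mult_eq_0_iff de_Morgan_disj simp_thms)
    qed
    also have "log 2 ((real N / real m) ^ m) = real m * log 2 (real N / real m)"
      using Nm0 by (simp add: log_nat_power)
    also have "log 2 (exp (real m)) = real m / ln 2" by (simp add: log_def)
    also have "log 2 (2 powr (R + real m)) = R + real m" by simp
    finally show ?thesis .
  qed
  have NmD: "real N / real m \<le> \<delta> * real n"
  proof -
    have "real N / real m \<le> real N / M" using mM Mp N2 by (intro divide_left_mono) auto
    also have "\<dots> = real D / real cP" unfolding M_def using N2 cP1 Dp by (simp add: field_simps)
    also have "\<dots> \<le> real D" using cP1 Dp by (simp add: divide_le_eq)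
    finally show ?thesis using Dle by linarith
  qed
  have Nm1: "real N / real m \<ge> 1" using mN m1 by simp
  have lg1: "log 2 (real N / real m) \<le> (ln \<delta> + ln (real n)) / ln 2"
  proof -
    have "log 2 (real N / real m) \<le> log 2 (\<delta> * real n)" using NmD Nm0 by (intro log_le_cancel_iff[THEN iffD2]) auto
    also have "\<dots> = (ln \<delta> + ln (real n)) / ln 2" using dl n1 by (simp add: log_def ln_mult)
    finally show ?thesis .
  qed
  have lg0: "log 2 (real N / real m) \<ge> 0" using Nm1 by simp
  define K where "K = 1 + (ln \<delta> + ln (real n) + 1) / ln 2"
  have K0: "K \<ge> 0"
  proof -
    have "ln (\<delta> * real n) \<ge> 0" using big by (intro ln_ge_zero) (simp add: cP_def; linarith)
    then have "ln \<delta> + ln (real n) \<ge> 0" using dl n1 by (simp add: ln_mult)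
    then show ?thesis unfolding K_def by (simp add: add_nonneg_nonneg)
  qed
  have lgF2: "log 2 (real (card Fam)) \<le> R + real m * K"
  proof -
    have "real m * log 2 (real N / real m) \<le> real m * ((ln \<delta> + ln (real n)) / ln 2)"
      using lg1 by (intro mult_left_mono) auto
    moreover have "real m * K = real m * ((ln \<delta> + ln (real n)) / ln 2) + real m / ln 2 + real m"
      unfolding K_def by (simp add: field_simps)
    ultimately show ?thesis using lgF by linarith
  qed
  have lgF3: "log 2 (real (card Fam)) \<le> R + (M + 1) * K"
  proof -
    have "real m * K \<le> (M + 1) * K" using mM K0 by (intro mult_right_mono) auto
    then show ?thesis using lgF2 by linarith
  qed
  have cb: "real N \<le> 4 * sqrt (real n) * Bn" using central_bound[OF n1] unfolding N Bn_def by simp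
  define E where "E = 8 * real (card P) / \<delta> * sqrt (real n) / real n + 4 * sqrt (real n) / 2^n"
  have ME: "(M + 1) / Bn \<le> E"
  proof -
    have np: "real n > 0" using n1 by simp
    have "M / Bn = real cP / real D * (real N / Bn)" unfolding M_def using Bp Dp by (simp add: field_simps)
    also have "\<dots> \<le> real cP / real D * (4 * sqrt (real n))"
      using cb Bp by (intro mult_left_mono) (auto simp: divide_le_eq mult.commute)
    also have "real cP / real D \<le> real cP * (2 / (\<delta> * real n))"
    proof -
      have "1 / real D \<le> 2 / (\<delta> * real n)" using Dge2 Dp dl np by (simp add: divide_simps)
      then show ?thesis using cP1 by (simp add: divide_inverse mult_left_mono)
    qed
    then have "real cP / real D * (4 * sqrt (real n)) \<le> real cP * (2 / (\<delta> * real n)) * (4 * sqrt (real n))"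
      by (intro mult_right_mono) auto
    also have "\<dots> = 8 * real (card P) / \<delta> * sqrt (real n) / real n" unfolding cP_def using dl np by (simp add: field_simps)
    finally have A: "M / Bn \<le> 8 * real (card P) / \<delta> * sqrt (real n) / real n" .
    have "(2::real) ^ n > 0" by simp
    then have B: "1 / Bn \<le> 4 * sqrt (real n) / 2^n" using cb Bp unfolding N by (simp add: divide_simps mult.commute)
    have "(M + 1) / Bn = M / Bn + 1 / Bn" by (simp add: add_divide_distrib)
    then show ?thesis using A B unfolding E_def by linarith
  qed
  have "log 2 (real (card Fam)) / Bn \<le> (R + (M + 1) * K) / Bn" using lgF3 Bp by (intro divide_right_mono) auto
  also have "\<dots> = (real (height P) - 1 + \<epsilon>) + (M + 1) / Bn * K" unfolding R_def using Bp by (simp add: field_simps)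
  also have "(M + 1) / Bn * K \<le> E * K" using ME K0 by (intro mult_right_mono) auto
  finally show ?thesis unfolding Fam_def Bn_def E_def K_def by simp
qed




theorem theorem1p6:
  fixes P :: "'a set set" and x :: "'a set"
  assumes tree: "tree_poset P"
    and xP: "x \<in> P"
    and blow: "\<forall>\<epsilon>::real. \<epsilon> > 0 \<longrightarrow> (\<exists>\<delta>::real. \<delta> > 0 \<and>
        (\<forall>\<^sub>F n in sequentially. \<forall>F. F \<subseteq> Pow {1..n} \<and>
            real (card F) \<ge> (real (height P) - 1 + \<epsilon>) * real (n choose (n div 2))
            \<longrightarrow> contains_blowup F P x (nat \<lfloor>\<delta> * real n\<rfloor>)))"
  shows "(\<lambda>n::nat. log 2 (real (card {F. F \<subseteq> Pow {1..n} \<and> P_free P F}))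
                    / real (n choose (n div 2)))
           \<longlonglongrightarrow> real (height P) - 1"
proof -
  define f where "f n = log 2 (real (card {F. F \<subseteq> Pow {1..n} \<and> P_free P F})) / real (n choose (n div 2))" for n
  have h1: "1 \<le> height P" using height_facts(1)[OF tree] .
  define H where "H = height P - 1"
  have HH: "real H = real (height P) - 1" unfolding H_def using h1 by simp
  have "f \<longlonglongrightarrow> real H"
  proof (rule order_tendstoI)
    fix a assume a: "a < real H"
    have lim: "(\<lambda>n::nat. real H * (1 - 8 * real H ^ 2 / real n)) \<longlonglongrightarrow> real H" by real_asymp
    have ev1: "eventually (\<lambda>n. a < real H * (1 - 8 * real H ^ 2 / real n)) sequentially"
      using order_tendstoD(1)[OF lim a] .
    have ev2: "eventually (\<lambda>n::nat. n \<ge> 2 * H + 2) sequentially" by (rule eventually_ge_at_top)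
    show "eventually (\<lambda>n. a < f n) sequentially"
      using ev1 ev2
    proof eventually_elim
      case (elim n)
      have m0: "0 < n div 2" and Hm: "height P - 1 \<le> n div 2" using elim(2) unfolding H_def by auto
      have lo: "real H * (1 - 2 * real H^2 / real (n div 2)) \<le> f n"
        using lower[OF tree m0 Hm] unfolding f_def H_def by simp
      have "real n \<le> 4 * real (n div 2)" using elim(2) by linarith
      then have "real n * real H^2 \<le> 4 * real (n div 2) * real H^2" by (rule mult_right_mono) simp
      then have "2 * real H^2 / real (n div 2) \<le> 8 * real H ^ 2 / real n"
        using m0 elim(2) by (simp add: divide_simps)
      then have "real H * (1 - 8 * real H ^ 2 / real n) \<le> real H * (1 - 2 * real H^2 / real (n div 2))"
        by (intro mult_left_mono) auto
      then show ?case using elim(1) lo by linarith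
    qed
  next
    fix a assume a: "real H < a"
    define \<epsilon> where "\<epsilon> = (a - real H) / 2"
    have ep: "\<epsilon> > 0" unfolding \<epsilon>_def using a by simp
    obtain \<delta> where dl: "\<delta> > 0" and ev: "\<forall>\<^sub>F n in sequentially. \<forall>F. F \<subseteq> Pow {1..n} \<and>
            real (card F) \<ge> (real (height P) - 1 + \<epsilon>) * real (n choose (n div 2))
            \<longrightarrow> contains_blowup F P x (nat \<lfloor>\<delta> * real n\<rfloor>)"
      using blow ep by blast
    have lim: "(\<lambda>n::nat. (8 * real (card P) / \<delta> * sqrt (real n) / real n + 4 * sqrt (real n) / 2^n)
         * (1 + (ln \<delta> + ln (real n) + 1) / ln 2)) \<longlonglongrightarrow> 0" by real_asymp
    have ev1: "eventually (\<lambda>n::nat. (8 * real (card P) / \<delta> * sqrt (real n) / real n + 4 * sqrt (real n) / 2^n)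
         * (1 + (ln \<delta> + ln (real n) + 1) / ln 2) < \<epsilon>) sequentially"
      using order_tendstoD(2)[OF lim ep] .
    have ev2: "eventually (\<lambda>n::nat. \<delta> * real n \<ge> 4 * real (card P) + 2) sequentially"
      using dl by real_asymp
    have ev3: "eventually (\<lambda>n::nat. n \<ge> 1) sequentially" by (rule eventually_ge_at_top)
    show "eventually (\<lambda>n. f n < a) sequentially"
      using ev ev1 ev2 ev3
    proof eventually_elim
      case (elim n)
      define T where "T = (8 * real (card P) / \<delta> * sqrt (real n) / real n + 4 * sqrt (real n) / 2^n)
         * (1 + (ln \<delta> + ln (real n) + 1) / ln 2)"
      have 1: "f n \<le> (real (height P) - 1 + \<epsilon>) + T"
        unfolding f_def T_def by (rule upper[OF tree xP dl elim(4) elim(3) elim(1)])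
      have 2: "T < \<epsilon>" unfolding T_def using elim(2) .
      have 3: "\<epsilon> + \<epsilon> = a - real H" unfolding \<epsilon>_def by simp
      show ?case using 1 2 3 HH by linarith
    qed
  qed
  then show ?thesis unfolding f_def HH .
qed


end
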